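(* Let $A \in \mathbb{R}^{n\times d_1}$ and $B \in \mathbb{R}^{n\times d_2}$, and let $M = [A \;\; B] \in \mathbb{R}^{n\times(d_1+d_2)}$ be their horizontal concatenation. For a real matrix $C$ with $k$ columns write $\sigma_{\max}(C) = \max_{z\in\mathbb{R}^k,\ \|z\|=1}\|Cz\|$ and $\sigma_{\min}(C) = \min_{z\in\mathbb{R}^k,\ \|z\|=1}\|Cz\|$ (Euclidean norms), and, when $\sigma_{\min}(C)>0$, $\kappa(C) = \sigma_{\max}(C)/\sigma_{\min}(C)$. Set $$s_{\max} = \max\{\sigma_{\max}(A),\sigma_{\max}(B)\},\qquad s_{\min} = \min\{\sigma_{\min}(A),\sigma_{\min}(B)\},$$ $$\rho = \|A^\top B\|_2,\qquad \tau = \frac{\max\{\sigma_{\max}(A),\sigma_{\max}(B)\}}{\min\{\sigma_{\max}(A),\sigma_{\max}(B)\}},\qquad \kappa_{\max} = \max\{\kappa(A),\kappa(B)\}.$$ Assume $\rho < s_{\min}^2$. Then $\sigma_{\max}(M)^2 \le s_{\max}^2 + \rho$, $\sigma_{\min}(M)^2 \ge s_{\min}^2 - \rho$, and $$\kappa(M) \;\le\; \sqrt{\frac{s_{\max}^2+\rho}{s_{\min}^2-\rho}} \;\le\; \sqrt{\frac{1+\rho/s_{\max}^2}{1-\rho/s_{\min}^2}}\cdot\frac{s_{\max}}{s_{\min}} \;\le\; \tau\sqrt{\frac{1+\rho/s_{\max}^2}{1-\rho/s_{\min}^2}}\;\kappa_{\max}.$$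
   Context: $\|\cdot\|_2$ denotes the spectral (operator 2-) norm. $\sigma_{\max}$ and $\sigma_{\min}$ are the largest and smallest singular values in the sense defined in the claim (the minimum of $\|Cz\|$ over unit vectors $z$ in the column space dimension), and $\kappa$ is the spectral condition number. *)

theory Defs
  imports "HOL-Analysis.Analysis"
begin

definition sigma_max :: "real^'k^'m \<Rightarrow> real" where
  "sigma_max C = Sup {norm (C *v z) | z. norm z = 1}"

definition sigma_min :: "real^'k^'m \<Rightarrow> real" where
  "sigma_min C = Inf {norm (C *v z) | z. norm z = 1}"

definition kappa :: "real^'k^'m \<Rightarrow> real" where
  "kappa C = sigma_max C / sigma_min C"

definition spec_norm :: "real^'k^'m \<Rightarrow> real" where
  "spec_norm C = onorm (\<lambda>z. C *v z)"

definition hcat :: "real^'d1^'n \<Rightarrow> real^'d2^'n \<Rightarrow> real^('d1 + 'd2)^'n" where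
  "hcat A B = (\<chi> i. \<chi> j. (case j of Inl a \<Rightarrow> A $ i $ a | Inr b \<Rightarrow> B $ i $ b))"

end

theory Submission imports Defs begin

lemma unit_ex: "\<exists>z::real^'k. norm z = 1"
  by (rule exI[of _ "axis undefined 1"]) simp

lemma smax_bdd: "bdd_above {norm ((C::real^'k^'m) *v z) | z. norm z = 1}"
proof -
  have "norm (C *v z) \<le> onorm ((*v) C) * norm z" for z
    by (rule onorm) simp
  then show ?thesis unfolding bdd_above_def by (intro exI[of _ "onorm ((*v) C)"]) (auto, metis mult.right_neutral)
qed

lemma le_sigma_max: "norm z = 1 \<Longrightarrow> norm ((C::real^'k^'m) *v z) \<le> sigma_max C"
  unfolding sigma_max_def by (rule cSup_upper) (use smax_bdd in auto)

lemma sigma_min_le: "norm z = 1 \<Longrightarrow> sigma_min (C::real^'k^'m) \<le> norm (C *v z)"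
  unfolding sigma_min_def by (rule cInf_lower) (auto intro: bdd_belowI[of _ 0])

lemma sigma_min_ge0: "0 \<le> sigma_min (C::real^'k^'m)"
  unfolding sigma_min_def using unit_ex[where 'k='k]
  by (intro cInf_greatest) auto

lemma sigma_min_le_max: "sigma_min (C::real^'k^'m) \<le> sigma_max C"
proof -
  obtain z :: "real^'k" where "norm z = 1" using unit_ex by blast
  then show ?thesis using le_sigma_max[of z C] sigma_min_le[of z C] by linarith
qed

lemma sigma_max_scaled: "norm ((C::real^'k^'m) *v x) \<le> sigma_max C * norm x"
proof (cases "x = 0")
  case True then show ?thesis by simp
next
  case False
  have "norm (C *v ((1/norm x) *\<^sub>R x)) \<le> sigma_max C"
    using False by (intro le_sigma_max) simp
  then show ?thesis using False
    by (simp add: matrix_vector_mult_scaleR field_simps)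
qed

lemma sigma_min_scaled: "sigma_min (C::real^'k^'m) * norm x \<le> norm (C *v x)"
proof (cases "x = 0")
  case True then show ?thesis by simp
next
  case False
  have "sigma_min C \<le> norm (C *v ((1/norm x) *\<^sub>R x))"
    using False by (intro sigma_min_le) simp
  then show ?thesis using False
    by (simp add: matrix_vector_mult_scaleR field_simps)
qed

lemma cross_bound:
  fixes A :: "real^'d1^'n" and B :: "real^'d2^'n"
  shows "\<bar>inner (A *v x) (B *v y)\<bar> \<le> spec_norm (transpose A ** B) * norm x * norm y"
proof -
  have "inner (A *v x) (B *v y) = inner x ((transpose A ** B) *v y)"
    by (metis dot_lmul_matrix vector_transpose_matrix matrix_vector_mul_assoc)
  also have "\<bar>\<dots>\<bar> \<le> norm x * norm ((transpose A ** B) *v y)"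
    by (rule Cauchy_Schwarz_ineq2)
  also have "\<dots> \<le> norm x * (spec_norm (transpose A ** B) * norm y)"
    unfolding spec_norm_def by (intro mult_left_mono onorm) auto
  finally show ?thesis by (simp add: mult_ac)
qed

lemma hcat_split:
  fixes A :: "real^'d1^'n" and B :: "real^'d2^'n" and z :: "real^('d1+'d2)"
  defines "x \<equiv> \<chi> a. z $ Inl a" and "y \<equiv> \<chi> b. z $ Inr b"
  shows "hcat A B *v z = A *v x + B *v y"
    and "(norm z)^2 = (norm x)^2 + (norm y)^2"
proof -
  have s: "(\<Sum>j\<in>UNIV. f j) = (\<Sum>a\<in>UNIV. f (Inl a)) + (\<Sum>b\<in>UNIV. f (Inr b))"
    for f :: "'d1+'d2 \<Rightarrow> real"
    using sum.Plus[of "UNIV::'d1 set" "UNIV::'d2 set" f] by (simp add: comp_def)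
  show "hcat A B *v z = A *v x + B *v y"
    unfolding hcat_def matrix_vector_mult_def x_def y_def
    by (simp add: vec_eq_iff s)
  show "(norm z)^2 = (norm x)^2 + (norm y)^2"
    unfolding power2_norm_eq_inner inner_vec_def x_def y_def by (simp add: s)
qed

theorem mainTheorem1:
  fixes A :: "real^'d1^'n" and B :: "real^'d2^'n"
  defines "M \<equiv> hcat A B"
    and "smax \<equiv> max (sigma_max A) (sigma_max B)"
    and "smin \<equiv> min (sigma_min A) (sigma_min B)"
    and "\<rho> \<equiv> spec_norm (transpose A ** B)"
    and "\<tau> \<equiv> max (sigma_max A) (sigma_max B) / min (sigma_max A) (sigma_max B)"
    and "kmax \<equiv> max (kappa A) (kappa B)"
  assumes "\<rho> < smin ^ 2"
  shows "sigma_max M ^ 2 \<le> smax ^ 2 + \<rho> \<and>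
         sigma_min M ^ 2 \<ge> smin ^ 2 - \<rho> \<and>
         kappa M \<le> sqrt ((smax ^ 2 + \<rho>) / (smin ^ 2 - \<rho>)) \<and>
         sqrt ((smax ^ 2 + \<rho>) / (smin ^ 2 - \<rho>))
           \<le> sqrt ((1 + \<rho> / smax ^ 2) / (1 - \<rho> / smin ^ 2)) * (smax / smin) \<and>
         sqrt ((1 + \<rho> / smax ^ 2) / (1 - \<rho> / smin ^ 2)) * (smax / smin)
           \<le> \<tau> * sqrt ((1 + \<rho> / smax ^ 2) / (1 - \<rho> / smin ^ 2)) * kmax"
proof -
  note ge0 = sigma_min_ge0[of A] sigma_min_ge0[of B]
  have rho0: "\<rho> \<ge> 0" unfolding \<rho>_def spec_norm_def by (rule onorm_pos_le) simp
  have smin0: "smin \<ge> 0" unfolding smin_def using ge0 by simp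
  have sminpos: "smin > 0"
  proof (rule ccontr)
    assume "\<not> smin > 0" then have "smin = 0" using smin0 by simp
    then show False using assms rho0 by simp
  qed
  have mA: "sigma_min A > 0" and mB: "sigma_min B > 0" using sminpos unfolding smin_def by auto
  have sAB: "sigma_min A \<le> sigma_max A" "sigma_min B \<le> sigma_max B" by (rule sigma_min_le_max)+
  have smaxpos: "smax > 0" unfolding smax_def using mA sAB by simp
  have sminmax: "smin \<le> smax" unfolding smin_def smax_def using sAB by simp
  have up: "norm (M *v z) \<le> sqrt (smax^2 + \<rho>)" and lo: "sqrt (smin^2 - \<rho>) \<le> norm (M *v z)"
    if z: "norm z = 1" for z
  proof -
    define x where "x = (\<chi> a. z $ Inl a)"
    define y where "y = (\<chi> b. z $ Inr b)"
    have e: "M *v z = A *v x + B *v y" and n: "(norm z)^2 = (norm x)^2 + (norm y)^2"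
      unfolding M_def x_def y_def by (rule hcat_split)+
    have sq: "(norm (M *v z))^2 = (norm (A *v x))^2 + (norm (B *v y))^2 + 2 * inner (A *v x) (B *v y)"
      unfolding e power2_norm_eq_inner by (simp add: inner_add_left inner_add_right inner_commute)
    have c: "\<bar>inner (A *v x) (B *v y)\<bar> \<le> \<rho> * norm x * norm y"
      unfolding \<rho>_def by (rule cross_bound)
    have xy: "2 * (norm x * norm y) \<le> (norm x)^2 + (norm y)^2"
      using sum_squares_bound[of "norm x" "norm y"] by (simp add: power2_eq_square)
    have n1: "(norm x)^2 + (norm y)^2 = 1" using n z by simp
    have ax: "norm (A *v x) \<le> smax * norm x"
      using sigma_max_scaled[of A x] unfolding smax_def
      by (meson max.cobounded1 mult_right_mono norm_ge_zero order_trans)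
    have by': "norm (B *v y) \<le> smax * norm y"
      using sigma_max_scaled[of B y] unfolding smax_def
      by (meson max.cobounded2 mult_right_mono norm_ge_zero order_trans)
    have ax2: "smin * norm x \<le> norm (A *v x)"
      using sigma_min_scaled[of A x] unfolding smin_def
      by (meson min.cobounded1 mult_right_mono norm_ge_zero order_trans)
    have by2: "smin * norm y \<le> norm (B *v y)"
      using sigma_min_scaled[of B y] unfolding smin_def
      by (meson min.cobounded2 mult_right_mono norm_ge_zero order_trans)
    have "(norm (A *v x))^2 \<le> smax^2 * (norm x)^2"
      using ax by (metis norm_ge_zero power_mono power_mult_distrib)
    moreover have "(norm (B *v y))^2 \<le> smax^2 * (norm y)^2"
      using by' by (metis norm_ge_zero power_mono power_mult_distrib)
    moreover have "smin^2 * (norm x)^2 \<le> (norm (A *v x))^2"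
      using ax2 smin0 by (metis mult_nonneg_nonneg norm_ge_zero power_mono power_mult_distrib)
    moreover have "smin^2 * (norm y)^2 \<le> (norm (B *v y))^2"
      using by2 smin0 by (metis mult_nonneg_nonneg norm_ge_zero power_mono power_mult_distrib)
    moreover have "\<rho> * (2 * (norm x * norm y)) \<le> \<rho> * 1"
      using xy n1 rho0 by (intro mult_left_mono) auto
    moreover have "smax^2 * (norm x)^2 + smax^2 * (norm y)^2 = smax^2"
      using n1 by (metis distrib_left mult.right_neutral)
    moreover have "smin^2 * (norm x)^2 + smin^2 * (norm y)^2 = smin^2"
      using n1 by (metis distrib_left mult.right_neutral)
    ultimately have u: "(norm (M *v z))^2 \<le> smax^2 + \<rho>" and l: "smin^2 - \<rho> \<le> (norm (M *v z))^2"
      using sq c n1 by (auto simp: abs_le_iff mult.assoc)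
    show "norm (M *v z) \<le> sqrt (smax^2 + \<rho>)" using u by (simp add: real_le_rsqrt)
    show "sqrt (smin^2 - \<rho>) \<le> norm (M *v z)" using l by (simp add: real_sqrt_le_iff real_le_lsqrt)
  qed
  obtain z0 :: "real^('d1+'d2)" where z0: "norm z0 = 1" using unit_ex by blast
  have SM: "sigma_max M \<le> sqrt (smax^2 + \<rho>)"
    unfolding sigma_max_def using z0 up by (intro cSup_least) auto
  have Sm: "sqrt (smin^2 - \<rho>) \<le> sigma_min M"
    unfolding sigma_min_def using z0 lo by (intro cInf_greatest) auto
  have Mge: "0 \<le> sigma_max M" using sigma_min_ge0[of M] sigma_min_le_max[of M] by linarith
  have d: "smin^2 - \<rho> > 0" using assms by simp
  have g1: "sigma_max M ^ 2 \<le> smax ^ 2 + \<rho>"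
    using SM Mge rho0 by (metis power_mono real_sqrt_pow2 add_nonneg_nonneg zero_le_power2)
  have g2: "sigma_min M ^ 2 \<ge> smin ^ 2 - \<rho>"
    using Sm d by (metis less_imp_le power_mono real_sqrt_ge_zero real_sqrt_pow2)
  have mMpos: "sigma_min M > 0" using Sm d by (meson less_le_trans real_sqrt_gt_zero)
  have g3: "kappa M \<le> sqrt ((smax ^ 2 + \<rho>) / (smin ^ 2 - \<rho>))"
  proof -
    have "kappa M = sigma_max M / sigma_min M" by (simp add: kappa_def)
    also have "\<dots> \<le> sqrt (smax^2 + \<rho>) / sqrt (smin^2 - \<rho>)"
      using SM Sm Mge d rho0 by (intro frac_le) auto
    finally show ?thesis by (simp add: real_sqrt_divide)
  qed
  have g4: "(smax ^ 2 + \<rho>) / (smin ^ 2 - \<rho>) = (1 + \<rho> / smax ^ 2) / (1 - \<rho> / smin ^ 2) * (smax / smin)^2"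
    using smaxpos sminpos d by (simp add: field_simps power2_eq_square)
  have g4': "sqrt ((smax ^ 2 + \<rho>) / (smin ^ 2 - \<rho>))
           = sqrt ((1 + \<rho> / smax ^ 2) / (1 - \<rho> / smin ^ 2)) * (smax / smin)"
    unfolding g4 real_sqrt_mult using smaxpos sminpos by simp
  have r: "smax / smin \<le> \<tau> * kmax"
  proof -
    have mpos: "min (sigma_max A) (sigma_max B) > 0" using mA mB sAB by simp
    have "1 / smin \<le> kmax / min (sigma_max A) (sigma_max B)"
    proof (cases "sigma_min A \<le> sigma_min B")
      case True
      then have "smin = sigma_min A" unfolding smin_def by simp
      moreover have "min (sigma_max A) (sigma_max B) / sigma_min A \<le> kappa A"
        unfolding kappa_def using mA by (intro divide_right_mono) auto
      moreover have "kappa A \<le> kmax" unfolding kmax_def by simp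
      ultimately have "min (sigma_max A) (sigma_max B) / smin / min (sigma_max A) (sigma_max B)
          \<le> kmax / min (sigma_max A) (sigma_max B)"
        using mpos by (intro divide_right_mono) auto
      then show ?thesis using mpos by simp
    next
      case False
      then have "smin = sigma_min B" unfolding smin_def by simp
      moreover have "min (sigma_max A) (sigma_max B) / sigma_min B \<le> kappa B"
        unfolding kappa_def using mB by (intro divide_right_mono) auto
      moreover have "kappa B \<le> kmax" unfolding kmax_def by simp
      ultimately have "min (sigma_max A) (sigma_max B) / smin / min (sigma_max A) (sigma_max B)
          \<le> kmax / min (sigma_max A) (sigma_max B)"
        using mpos by (intro divide_right_mono) auto
      then show ?thesis using mpos by simp
    qed
    then have "smax * (1 / smin) \<le> smax * (kmax / min (sigma_max A) (sigma_max B))"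
      using smaxpos by (intro mult_left_mono) auto
    then show ?thesis unfolding \<tau>_def smax_def by (simp add: field_simps)
  qed
  have g5: "sqrt ((1 + \<rho> / smax ^ 2) / (1 - \<rho> / smin ^ 2)) * (smax / smin)
           \<le> \<tau> * sqrt ((1 + \<rho> / smax ^ 2) / (1 - \<rho> / smin ^ 2)) * kmax"
    using mult_left_mono[OF r real_sqrt_ge_zero, of "(1 + \<rho> / smax ^ 2) / (1 - \<rho> / smin ^ 2)"]
      smaxpos sminpos d rho0
    by (simp add: field_simps)
  show ?thesis using g1 g2 g3 g4' g5 by simp
qed

end
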